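(* In the setting below, let $\mathfrak f=\mathrm{Im}\,\beta\subset\mathfrak g$, $\mathfrak f^\perp=\ker\beta\subset\mathfrak g^*$, and let $s:\mathfrak f\to\mathfrak g^*$ be a linear map with $\beta\circ s=\mathrm{id}_{\mathfrak f}$. Then $\mathfrak g\oplus i\mathfrak f$ is a real Lie subalgebra of $\hat{\mathfrak g}$, $\mathfrak f^\perp$ is a $(\mathfrak g\oplus i\mathfrak f)$-module under $(x+iy)\cdot a^*=\mathrm{ad}^*(x)a^*$, and for each sign the bilinear map $\tau_\pm(x_1+iy_1,x_2+iy_2)=\pm\big(\mathrm{ad}^*(x_1)s(y_2)-\mathrm{ad}^*(x_2)s(y_1)-s([x_1,y_2])+s([x_2,y_1])\big)$ ($x_j\in\mathfrak g$, $y_j\in\mathfrak f$) takes values in $\mathfrak f^\perp$ and is a $2$-cocycle of $\mathfrak g\oplus i\mathfrak f$ with values in $\mathfrak f^\perp$. Moreover $\mathcal D(\mathfrak g)\cong(\mathfrak g\oplus i\mathfrak f)\ltimes_{\tau_\pm}\mathfrak f^\perp$ as Lie algebras, via $(x+iy,a^* )\mapsto S_\pm(x+iy)+\iota(a^* )$, where $S_\pm(x+iy)=(x\mp\alpha(s(y)),\pm s(y))$ and $\iota(a^* )=(-\alpha(a^* ),a^* )$.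
   Context: Setting: $\mathfrak g$ is a finite-dimensional real Lie algebra and $r\in\mathfrak g\otimes\mathfrak g$ (identified with $r:\mathfrak g^*\to\mathfrak g$, $\langle r(a^* ),b^*\rangle=\langle a^*\otimes b^*,r\rangle$) is a solution of the type II CYBE $[r_{12},r_{13}]+[r_{12},r_{23}]+[r_{13},r_{23}]=\frac12[r_{13}+r_{31},r_{23}+r_{32}]$ (for $r=\sum a_i\otimes b_i$: $[r_{12},r_{13}]=\sum[a_i,a_j]\otimes b_i\otimes b_j$, $[r_{12},r_{23}]=\sum a_i\otimes[b_i,a_j]\otimes b_j$, $[r_{13},r_{23}]=\sum a_i\otimes a_j\otimes[b_i,b_j]$; with $r+\sigma(r)=\sum c_k\otimes d_k$, $[r_{13}+r_{31},r_{23}+r_{32}]=\sum c_k\otimes c_l\otimes[d_k,d_l]$), whose symmetric part $\beta=(r+r^t)/2$ is invariant ($(\mathrm{ad}(x)\otimes\mathrm{id}+\mathrm{id}\otimes\mathrm{ad}(x))\beta=0$); $\alpha=(r-r^t)/2$. Coadjoint action: $\langle\mathrm{ad}^*(x)a^*,y\rangle=-\langle a^*,[x,y]\rangle$. On $\mathfrak g^*$ set $[a^*,b^*]_\delta=\mathrm{ad}^*(\alpha(a^* ))b^*-\mathrm{ad}^*(\alpha(b^* ))a^*$ and for $a^*\in\mathfrak g^*,x\in\mathfrak g$ define $\mathrm{ad}^*(a^* )x\in\mathfrak g$ by $\langle\mathrm{ad}^*(a^* )x,b^*\rangle=-\langle x,[a^*,b^*]_\delta\rangle$. The Drinfeld double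 $\mathcal D(\mathfrak g)=\mathfrak g\oplus\mathfrak g^*$ has bracket $[(x,a^* ),(y,b^* )]=([x,y]+\mathrm{ad}^*(a^* )y-\mathrm{ad}^*(b^* )x,[a^*,b^*]_\delta+\mathrm{ad}^*(x)b^*-\mathrm{ad}^*(y)a^* )$. $\hat{\mathfrak g}=\mathfrak g\oplus i\mathfrak g$ is the complexification viewed as a real Lie algebra. For a Lie algebra $\mathfrak h$, an $\mathfrak h$-module $V$ and a 2-cocycle $\tau$, $\mathfrak h\ltimes_\tau V$ is $\mathfrak h\oplus V$ with bracket $[(X,u),(Y,v)]=([X,Y],X\cdot v-Y\cdot u+\tau(X,Y))$. *)

theory Defs
  imports "HOL-Analysis.Analysis"
begin

(* Conventions.  g = real^'n with standard basis e_i = axis i 1; g^* = real^'n with the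
   dual basis, so the pairing <a*, x> is the dot product  a \<bullet> x.
   A tensor r = \<Sum>_{i,j} R$i$j e_i \<otimes> e_j in g\<otimes>g is the matrix R :: real^'n^'n. *)

definition lie_algebra :: "(real^'n::finite \<Rightarrow> real^'n \<Rightarrow> real^'n) \<Rightarrow> bool" where
  "lie_algebra br \<longleftrightarrow> bilinear br \<and> (\<forall>x. br x x = 0) \<and>
     (\<forall>x y z. br x (br y z) + br y (br z x) + br z (br x y) = 0)"

definition sc :: "(real^'n::finite \<Rightarrow> real^'n \<Rightarrow> real^'n) \<Rightarrow> 'n \<Rightarrow> 'n \<Rightarrow> 'n \<Rightarrow> real" where
  "sc br i j k = br (axis i 1) (axis j 1) $ k"

(* components (p,q,s) of [r12,r13] + [r12,r23] + [r13,r23] *)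
definition cybe_lhs :: "(real^'n::finite \<Rightarrow> real^'n \<Rightarrow> real^'n) \<Rightarrow> real^'n^'n \<Rightarrow> 'n \<Rightarrow> 'n \<Rightarrow> 'n \<Rightarrow> real" where
  "cybe_lhs br R p q s =
     (\<Sum>i\<in>UNIV. \<Sum>k\<in>UNIV. R$i$q * R$k$s * sc br i k p)
   + (\<Sum>j\<in>UNIV. \<Sum>k\<in>UNIV. R$p$j * R$k$s * sc br j k q)
   + (\<Sum>j\<in>UNIV. \<Sum>l\<in>UNIV. R$p$j * R$q$l * sc br j l s)"

(* components (p,q,s) of [r13 + r31, r23 + r32] *)
definition cybe_rhs :: "(real^'n::finite \<Rightarrow> real^'n \<Rightarrow> real^'n) \<Rightarrow> real^'n^'n \<Rightarrow> 'n \<Rightarrow> 'n \<Rightarrow> 'n \<Rightarrow> real" where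
  "cybe_rhs br R p q s =
     (let S = R + transpose R in \<Sum>j\<in>UNIV. \<Sum>l\<in>UNIV. S$p$j * S$q$l * sc br j l s)"

definition typeII_CYBE :: "(real^'n::finite \<Rightarrow> real^'n \<Rightarrow> real^'n) \<Rightarrow> real^'n^'n \<Rightarrow> bool" where
  "typeII_CYBE br R \<longleftrightarrow> (\<forall>p q s. cybe_lhs br R p q s = (1/2) * cybe_rhs br R p q s)"

definition sym_part :: "real^'n^'n \<Rightarrow> real^'n^'n" where
  "sym_part R = (1/2) *\<^sub>R (R + transpose R)"

definition skew_part :: "real^'n^'n \<Rightarrow> real^'n^'n" where
  "skew_part R = (1/2) *\<^sub>R (R - transpose R)"

(* (ad x \<otimes> id + id \<otimes> ad x) B = 0, in components *)
definition ad_invariant :: "(real^'n::finite \<Rightarrow> real^'n \<Rightarrow> real^'n) \<Rightarrow> real^'n^'n \<Rightarrow> bool" where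
  "ad_invariant br B \<longleftrightarrow> (\<forall>x p q.
     (\<Sum>i\<in>UNIV. B$i$q * br x (axis i 1) $ p) + (\<Sum>j\<in>UNIV. B$p$j * br x (axis j 1) $ q) = 0)"

(* the map g^* \<rightarrow> g attached to a tensor: <M a', b'> = <a' \<otimes> b', M> *)
definition tmap :: "real^'n^'n \<Rightarrow> real^'n::finite \<Rightarrow> real^'n" where
  "tmap M a = (\<chi> j. \<Sum>i\<in>UNIV. M$i$j * a$i)"

(* coadjoint action: <coad x a, y> = - <a, [x,y]> *)
definition coad :: "(real^'n::finite \<Rightarrow> real^'n \<Rightarrow> real^'n) \<Rightarrow> real^'n \<Rightarrow> real^'n \<Rightarrow> real^'n" where
  "coad br x a = (\<chi> j. - (a \<bullet> br x (axis j 1)))"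

definition brd :: "(real^'n::finite \<Rightarrow> real^'n \<Rightarrow> real^'n) \<Rightarrow> real^'n^'n \<Rightarrow> real^'n \<Rightarrow> real^'n \<Rightarrow> real^'n" where
  "brd br A a b = coad br (tmap A a) b - coad br (tmap A b) a"

definition coadd :: "(real^'n::finite \<Rightarrow> real^'n \<Rightarrow> real^'n) \<Rightarrow> real^'n^'n \<Rightarrow> real^'n \<Rightarrow> real^'n \<Rightarrow> real^'n" where
  "coadd br A a x = (\<chi> j. - (x \<bullet> brd br A a (axis j 1)))"

(* bracket of the Drinfeld double g \<oplus> g^* (A = \<alpha>) *)
definition dbr :: "(real^'n::finite \<Rightarrow> real^'n \<Rightarrow> real^'n) \<Rightarrow> real^'n^'n \<Rightarrow>
     ((real^'n) \<times> (real^'n)) \<Rightarrow> ((real^'n) \<times> (real^'n)) \<Rightarrow> ((real^'n) \<times> (real^'n))" where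
  "dbr br A u v =
     (br (fst u) (fst v) + coadd br A (snd u) (fst v) - coadd br A (snd v) (fst u),
      brd br A (snd u) (snd v) + coad br (fst u) (snd v) - coad br (fst v) (snd u))"

(* bracket of the complexification g \<oplus> i g, (x,y) meaning x + i y *)
definition cbr :: "(real^'n::finite \<Rightarrow> real^'n \<Rightarrow> real^'n) \<Rightarrow>
     ((real^'n) \<times> (real^'n)) \<Rightarrow> ((real^'n) \<times> (real^'n)) \<Rightarrow> ((real^'n) \<times> (real^'n))" where
  "cbr br u v = (br (fst u) (fst v) - br (snd u) (snd v), br (fst u) (snd v) + br (snd u) (fst v))"

definition linear_on :: "'a::real_vector set \<Rightarrow> ('a \<Rightarrow> 'b::real_vector) \<Rightarrow> bool" where
  "linear_on D f \<longleftrightarrow> (\<forall>x\<in>D. \<forall>y\<in>D. f (x + y) = f x + f y) \<and> (\<forall>x\<in>D. \<forall>c. f (c *\<^sub>R x) = c *\<^sub>R f x)"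

definition bilinear_on :: "'a::real_vector set \<Rightarrow> 'b::real_vector set \<Rightarrow> ('a \<Rightarrow> 'b \<Rightarrow> 'c::real_vector) \<Rightarrow> bool" where
  "bilinear_on D E f \<longleftrightarrow> (\<forall>x\<in>D. linear_on E (f x)) \<and> (\<forall>y\<in>E. linear_on D (\<lambda>x. f x y))"

definition lie_subalgebra :: "('a::real_vector \<Rightarrow> 'a \<Rightarrow> 'a) \<Rightarrow> 'a set \<Rightarrow> bool" where
  "lie_subalgebra brH L \<longleftrightarrow> subspace L \<and> (\<forall>u\<in>L. \<forall>v\<in>L. brH u v \<in> L)"

definition lie_module :: "('a::real_vector \<Rightarrow> 'a \<Rightarrow> 'a) \<Rightarrow> 'a set \<Rightarrow> ('a \<Rightarrow> 'v::real_vector \<Rightarrow> 'v) \<Rightarrow> 'v set \<Rightarrow> bool" where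
  "lie_module brH L act V \<longleftrightarrow> subspace V \<and> (\<forall>u\<in>L. \<forall>a\<in>V. act u a \<in> V) \<and> bilinear_on L V act \<and>
     (\<forall>u\<in>L. \<forall>v\<in>L. \<forall>a\<in>V. act (brH u v) a = act u (act v a) - act v (act u a))"

definition lie_2cocycle :: "('a::real_vector \<Rightarrow> 'a \<Rightarrow> 'a) \<Rightarrow> 'a set \<Rightarrow> ('a \<Rightarrow> 'v::real_vector \<Rightarrow> 'v) \<Rightarrow> 'v set \<Rightarrow> ('a \<Rightarrow> 'a \<Rightarrow> 'v) \<Rightarrow> bool" where
  "lie_2cocycle brH L act V t \<longleftrightarrow> (\<forall>u\<in>L. \<forall>v\<in>L. t u v \<in> V) \<and> bilinear_on L L t \<and> (\<forall>u\<in>L. t u u = 0) \<and>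
     (\<forall>x\<in>L. \<forall>y\<in>L. \<forall>z\<in>L.
        act x (t y z) - act y (t x z) + act z (t x y)
        - t (brH x y) z + t (brH x z) y - t (brH y z) x = 0)"

definition semidirect :: "('a \<Rightarrow> 'a \<Rightarrow> 'a) \<Rightarrow> ('a \<Rightarrow> 'v::real_vector \<Rightarrow> 'v) \<Rightarrow> ('a \<Rightarrow> 'a \<Rightarrow> 'v) \<Rightarrow>
     ('a \<times> 'v) \<Rightarrow> ('a \<times> 'v) \<Rightarrow> ('a \<times> 'v)" where
  "semidirect brH act t p q = (brH (fst p) (fst q), act (fst p) (snd q) - act (fst q) (snd p) + t (fst p) (fst q))"

definition lie_iso :: "('a::real_vector \<Rightarrow> 'a \<Rightarrow> 'a) \<Rightarrow> 'a set \<Rightarrow> ('b::real_vector \<Rightarrow> 'b \<Rightarrow> 'b) \<Rightarrow> 'b set \<Rightarrow> ('a \<Rightarrow> 'b) \<Rightarrow> bool" where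
  "lie_iso br1 D1 br2 D2 \<phi> \<longleftrightarrow> bij_betw \<phi> D1 D2 \<and> linear_on D1 \<phi> \<and>
     (\<forall>p\<in>D1. \<forall>q\<in>D1. \<phi> (br1 p q) = br2 (\<phi> p) (\<phi> q))"

(* g \<oplus> i f, with f = Im \<beta> *)
definition g_if :: "real^'n^'n \<Rightarrow> ((real^'n::finite) \<times> (real^'n)) set" where
  "g_if B = {u. snd u \<in> range (tmap B)}"

(* f^\<perp> = ker \<beta> *)
definition fperp :: "real^'n^'n \<Rightarrow> (real^'n::finite) set" where
  "fperp B = {a. tmap B a = 0}"

definition tau :: "(real^'n::finite \<Rightarrow> real^'n \<Rightarrow> real^'n) \<Rightarrow> (real^'n \<Rightarrow> real^'n) \<Rightarrow> real \<Rightarrow>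
     ((real^'n) \<times> (real^'n)) \<Rightarrow> ((real^'n) \<times> (real^'n)) \<Rightarrow> real^'n" where
  "tau br s \<sigma> u v = \<sigma> *\<^sub>R (coad br (fst u) (s (snd v)) - coad br (fst v) (s (snd u))
                           - s (br (fst u) (snd v)) + s (br (fst v) (snd u)))"

(* (x + i y, a) maps to S_sigma (x+iy) + iota a *)
definition Phi :: "real^'n^'n \<Rightarrow> (real^'n::finite \<Rightarrow> real^'n) \<Rightarrow> real \<Rightarrow>
     (((real^'n) \<times> (real^'n)) \<times> (real^'n)) \<Rightarrow> ((real^'n) \<times> (real^'n))" where
  "Phi A s \<sigma> p = (fst (fst p) - \<sigma> *\<^sub>R tmap A (s (snd (fst p))), \<sigma> *\<^sub>R s (snd (fst p)))
                 + (- tmap A (snd p), snd p)"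

end

theory Submission imports Defs begin

lemma lin_expand:
  fixes f :: "real^'n::finite \<Rightarrow> 'b::real_vector"
  assumes "linear f"
  shows "f a = (\<Sum>p\<in>UNIV. a$p *\<^sub>R f (axis p 1))"
proof -
  have "f a = f (\<Sum>p\<in>UNIV. a$p *\<^sub>R axis p 1)"
    using basis_expansion[of a] by (simp add: scalar_mult_eq_scaleR)
  also have "\<dots> = (\<Sum>p\<in>UNIV. a$p *\<^sub>R f (axis p 1))"
    using assms by (simp add: linear_sum linear_scale)
  finally show ?thesis .
qed

lemma dot_chi:
  fixes L :: "real^'n::finite \<Rightarrow> real^'n"
  assumes "linear L"
  shows "(\<chi> j. v \<bullet> L (axis j 1)) \<bullet> d = v \<bullet> L d"
proof -
  have "v \<bullet> L d = v \<bullet> (\<Sum>p\<in>UNIV. d$p *\<^sub>R L (axis p 1))"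
    using lin_expand[OF assms] by metis
  also have "\<dots> = (\<Sum>p\<in>UNIV. d$p * (v \<bullet> L (axis p 1)))"
    by (simp add: inner_sum_right)
  finally show ?thesis by (simp add: inner_vec_def mult.commute)
qed

lemma tmap_axis: "tmap M (axis p 1) $ j = M$p$j"
  by (simp add: tmap_def axis_def if_distrib cong: if_cong)

lemma tmap_linear: "linear (tmap M)"
  by (rule linearI) (simp_all add: tmap_def vec_eq_iff algebra_simps sum.distrib sum_distrib_left)

lemma tmap_dot: "tmap M a \<bullet> b = a \<bullet> tmap (transpose M) b"
  by (simp add: tmap_def inner_vec_def transpose_def sum_distrib_left sum_distrib_right
      algebra_simps; subst sum.swap; simp add: algebra_simps)

lemma tmap_madd: "tmap (M + N) a = tmap M a + tmap N a"
  by (simp add: tmap_def vec_eq_iff algebra_simps sum.distrib)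
lemma tmap_mscale: "tmap (c *\<^sub>R M) a = c *\<^sub>R tmap M a"
  by (simp add: tmap_def vec_eq_iff algebra_simps sum_distrib_left)
lemma tmap_mneg: "tmap (- M) a = - tmap M a"
  by (simp add: tmap_def vec_eq_iff sum_negf)
lemma tmap_msub: "tmap (M - N) a = tmap M a - tmap N a"
  by (simp add: tmap_def vec_eq_iff algebra_simps sum_subtractf)


lemma lin_eq_basis:
  fixes f g :: "real^'n::finite \<Rightarrow> 'b::real_vector"
  assumes "linear f" "linear g" "\<And>p. f (axis p 1) = g (axis p 1)"
  shows "f a = g a"
  using lin_expand[OF assms(1), of a] lin_expand[OF assms(2), of a] assms(3) by simp

locale T =
  fixes br :: "real^'n::finite \<Rightarrow> real^'n \<Rightarrow> real^'n"
    and R :: "real^'n^'n"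
    and s :: "real^'n \<Rightarrow> real^'n"
    and \<sigma> :: real
  assumes lie: "lie_algebra br"
    and cy: "typeII_CYBE br R"
    and inv: "ad_invariant br (sym_part R)"
    and slin: "linear_on (range (tmap (sym_part R))) s"
    and sinv: "\<forall>y\<in>range (tmap (sym_part R)). tmap (sym_part R) (s y) = y"
    and sig: "\<sigma> = 1 \<or> \<sigma> = -1"
begin

abbreviation "al \<equiv> tmap (skew_part R)"
abbreviation "be \<equiv> tmap (sym_part R)"
abbreviation "F \<equiv> range be"
abbreviation "cd \<equiv> coad br"

lemma bil: "bilinear br" using lie by (simp add: lie_algebra_def)

lemmas brl = bilinear_ladd[OF bil] bilinear_radd[OF bil] bilinear_lmul[OF bil] bilinear_rmul[OF bil]
  bilinear_lneg[OF bil] bilinear_rneg[OF bil] bilinear_lsub[OF bil] bilinear_rsub[OF bil]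
  bilinear_lzero[OF bil] bilinear_rzero[OF bil]

lemma br_self: "br x x = 0" using lie by (simp add: lie_algebra_def)

lemma anti: "br y x = - br x y"
proof -
  have "0 = br (x+y) (x+y)" by (simp add: br_self)
  also have "\<dots> = br x x + br x y + (br y x + br y y)" by (simp add: brl)
  finally have "br x y + br y x = 0" by (simp add: br_self)
  then show ?thesis by (simp add: eq_neg_iff_add_eq_0 add.commute)
qed

lemma jac: "br x (br y z) + br y (br z x) + br z (br x y) = 0"
  using lie by (simp add: lie_algebra_def)

lemma lin_brl: "linear (\<lambda>x. br x y)" using bil by (simp add: bilinear_def)
lemma lin_brr: "linear (br x)" using bil by (simp add: bilinear_def)

lemma coad_dot: "cd x a \<bullet> y = - (a \<bullet> br x y)"
proof -
  have "cd x a = (\<chi> j. (-a) \<bullet> br x (axis j 1))" by (simp add: coad_def)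
  then show ?thesis using dot_chi[OF lin_brr, of "-a" x y] by simp
qed

lemma cdl:
  "cd x (a + b) = cd x a + cd x b" "cd x (c *\<^sub>R a) = c *\<^sub>R cd x a"
  "cd x (- a) = - cd x a" "cd x (a - b) = cd x a - cd x b" "cd x 0 = 0"
  "cd (x + y) a = cd x a + cd y a" "cd (c *\<^sub>R x) a = c *\<^sub>R cd x a"
  "cd (- x) a = - cd x a" "cd (x - y) a = cd x a - cd y a" "cd 0 a = 0"
  by (simp_all add: coad_def vec_eq_iff brl inner_add_left inner_diff_left inner_add_right inner_diff_right algebra_simps)

lemma lin_cd: "linear (cd x)" by (rule linearI) (simp_all add: cdl)
lemma lin_cd2: "linear (\<lambda>x. cd x a)" by (rule linearI) (simp_all add: cdl)

lemma tl: "tmap M (a + b) = tmap M a + tmap M b" "tmap M (c *\<^sub>R a) = c *\<^sub>R tmap M a"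
  "tmap M (- a) = - tmap M a" "tmap M (a - b) = tmap M a - tmap M b" "tmap M 0 = 0"
  using tmap_linear[of M] by (simp_all add: linear_add linear_scale linear_neg linear_diff linear_0)

lemma be_sym: "be a \<bullet> b = a \<bullet> be b"
proof -
  have "transpose (sym_part R) = sym_part R"
    by (simp add: sym_part_def transpose_def vec_eq_iff)
  then show ?thesis by (simp add: tmap_dot)
qed

lemma al_skew: "al a \<bullet> b = - (a \<bullet> al b)"
proof -
  have "transpose (skew_part R) = - skew_part R"
    by (simp add: skew_part_def transpose_def vec_eq_iff field_simps)
  then show ?thesis by (simp add: tmap_dot tmap_mneg)
qed

lemma r_split: "tmap R a = al a + be a"
  unfolding vec_eq_iff by (simp add: tmap_def sym_part_def skew_part_def transpose_def sum.distrib[symmetric] field_simps)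

lemma rt_split: "tmap (transpose R) a = be a - al a"
  unfolding vec_eq_iff by (simp add: tmap_def sym_part_def skew_part_def transpose_def sum_subtractf[symmetric] field_simps)


lemma br_comp: "br u v $ q = (\<Sum>j\<in>UNIV. \<Sum>l\<in>UNIV. u$j * v$l * sc br j l q)"
proof -
  have "br u v = (\<Sum>j\<in>UNIV. u$j *\<^sub>R br (axis j 1) v)" using lin_expand[OF lin_brl] by blast
  moreover have "\<And>j. br (axis j 1) v = (\<Sum>l\<in>UNIV. v$l *\<^sub>R br (axis j 1) (axis l 1))"
    using lin_expand[OF lin_brr] by blast
  ultimately show ?thesis by (simp add: sum_component sc_def sum_distrib_left algebra_simps)
qed

lemma invar: "be (cd x a) = br x (be a)"
proof (rule lin_eq_basis[where f="\<lambda>a. be (cd x a)"])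
  show "linear (\<lambda>a. be (cd x a))" using linear_compose[OF lin_cd tmap_linear] by (simp add: o_def)
  show "linear (\<lambda>a. br x (be a))" using linear_compose[OF tmap_linear lin_brr] by (simp add: o_def)
  fix k
  show "be (cd x (axis k 1)) = br x (be (axis k 1))"
  proof (subst vec_eq_iff, rule allI)
    fix p
    have i: "(\<Sum>i\<in>UNIV. sym_part R$i$p * br x (axis i 1) $ k) + (\<Sum>j\<in>UNIV. sym_part R$k$j * br x (axis j 1) $ p) = 0"
      using inv by (simp add: ad_invariant_def)
    have "be (cd x (axis k 1)) $ p = (\<Sum>i\<in>UNIV. sym_part R$i$p * cd x (axis k 1) $ i)"
      by (simp add: tmap_def)
    also have "\<dots> = - (\<Sum>i\<in>UNIV. sym_part R$i$p * br x (axis i 1) $ k)"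
      by (simp add: coad_def inner_axis' sum_negf)
    also have "\<dots> = (\<Sum>j\<in>UNIV. sym_part R$k$j * br x (axis j 1) $ p)" using i by simp
    also have "\<dots> = br x (be (axis k 1)) $ p"
      using lin_expand[OF lin_brr[of x], of "be (axis k 1)"] by (simp add: sum_component tmap_axis)
    finally show "be (cd x (axis k 1)) $ p = br x (be (axis k 1)) $ p" .
  qed
qed


lemma bax: "br u (axis i 1) $ k = (\<Sum>j\<in>UNIV. u$j * sc br j i k)"
  using lin_expand[OF lin_brl[of "axis i 1"], of u] by (simp add: sum_component sc_def)

lemma tmap_comp: "tmap M v $ k = (\<Sum>i\<in>UNIV. M$i$k * v$i)" by (simp add: tmap_def)

abbreviation "W a b \<equiv> br (tmap R a) (tmap R b) - tmap R (cd (tmap R a) b)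
   - tmap R (cd (tmap (transpose R) b) a) - 2 *\<^sub>R br (be a) (be b)"

lemma W_basis: "W (axis p 1) (axis q 1) = 0"
proof (subst vec_eq_iff, rule allI)
  fix s
  have t3: "br (tmap R (axis p 1)) (tmap R (axis q 1)) $ s = (\<Sum>j\<in>UNIV. \<Sum>l\<in>UNIV. R$p$j * R$q$l * sc br j l s)"
    by (simp add: br_comp tmap_axis)
  have "tmap R (cd (tmap R (axis p 1)) (axis q 1)) $ s = (\<Sum>i\<in>UNIV. R$i$s * (- (\<Sum>j\<in>UNIV. R$p$j * sc br j i q)))"
    by (subst tmap_comp) (simp add: coad_def inner_axis' bax tmap_axis)
  also have "\<dots> = - (\<Sum>i\<in>UNIV. \<Sum>j\<in>UNIV. R$p$j * R$i$s * sc br j i q)"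
    by (simp add: sum_distrib_left sum_negf algebra_simps)
  also have "\<dots> = - (\<Sum>j\<in>UNIV. \<Sum>i\<in>UNIV. R$p$j * R$i$s * sc br j i q)"
    by (subst sum.swap) simp
  finally have t2: "tmap R (cd (tmap R (axis p 1)) (axis q 1)) $ s = - (\<Sum>j\<in>UNIV. \<Sum>i\<in>UNIV. R$p$j * R$i$s * sc br j i q)" .
  have "tmap R (cd (tmap (transpose R) (axis q 1)) (axis p 1)) $ s = (\<Sum>k\<in>UNIV. R$k$s * (- (\<Sum>i\<in>UNIV. R$i$q * sc br i k p)))"
    by (subst tmap_comp) (simp add: coad_def inner_axis' bax tmap_axis transpose_def)
  also have "\<dots> = - (\<Sum>k\<in>UNIV. \<Sum>i\<in>UNIV. R$i$q * R$k$s * sc br i k p)"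
    by (simp add: sum_distrib_left sum_negf algebra_simps)
  also have "\<dots> = - (\<Sum>i\<in>UNIV. \<Sum>k\<in>UNIV. R$i$q * R$k$s * sc br i k p)"
    by (subst sum.swap) simp
  finally have t1: "tmap R (cd (tmap (transpose R) (axis q 1)) (axis p 1)) $ s = - (\<Sum>i\<in>UNIV. \<Sum>k\<in>UNIV. R$i$q * R$k$s * sc br i k p)" .
  have t4: "(2 *\<^sub>R br (be (axis p 1)) (be (axis q 1))) $ s = 1/2 * cybe_rhs br R p q s"
    by (simp add: br_comp tmap_axis sym_part_def cybe_rhs_def Let_def sum_distrib_left algebra_simps)
  have c: "cybe_lhs br R p q s = 1/2 * cybe_rhs br R p q s" using cy by (simp add: typeII_CYBE_def)
  show "W (axis p 1) (axis q 1) $ s = 0 $ s"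
    using c t1 t2 t3 t4 by (simp add: cybe_lhs_def)
qed

lemma W_zero: "W a b = 0"
proof -
  have lb: "linear (\<lambda>b. W a b)" for a
    by (rule linearI) (simp_all add: tl cdl brl algebra_simps)
  have la: "linear (\<lambda>a. W a b)" for b
    by (rule linearI) (simp_all add: tl cdl brl algebra_simps)
  have "W (axis p 1) b = 0" for p
    using lin_eq_basis[OF lb[of "axis p 1"] linear_zero, of b] W_basis by simp
  then show ?thesis using lin_eq_basis[OF la[of b] linear_zero, of a] by simp
qed


lemma I2: "cd (be a) b = - cd (be b) a"
proof -
  have "cd (be a) b \<bullet> d = - (cd (be b) a \<bullet> d)" for d
  proof -
    have "cd (be a) b \<bullet> d = - (b \<bullet> br (be a) d)" by (rule coad_dot)
    also have "br (be a) d = - br d (be a)" by (rule anti)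
    also have "br d (be a) = be (cd d a)" by (rule invar[symmetric])
    also have "- (b \<bullet> - be (cd d a)) = be b \<bullet> cd d a" by (simp add: be_sym)
    also have "\<dots> = cd d a \<bullet> be b" by (simp add: inner_commute)
    also have "\<dots> = - (a \<bullet> br d (be b))" by (rule coad_dot)
    also have "br d (be b) = - br (be b) d" by (rule anti)
    also have "- (a \<bullet> - br (be b) d) = - (cd (be b) a \<bullet> d)" by (simp add: coad_dot)
    finally show ?thesis .
  qed
  then show ?thesis using vector_eq_rdot[of "cd (be a) b" "- cd (be b) a"] by simp
qed

lemma two_vec: "2 * (v::real^'n) = 2 *\<^sub>R v" by (simp add: vec_eq_iff)

lemma KEY: "br (al a) (al b) - al (brd br (skew_part R) a b) = br (be a) (be b)"
proof -
  have "W a b = br (al a) (al b) - al (brd br (skew_part R) a b) - br (be a) (be b)"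
    unfolding r_split rt_split brd_def
    using I2[of a b] anti[of "be a" "al b"]
    by (simp add: tl cdl brl invar algebra_simps) (simp add: two_vec)
  then show ?thesis using W_zero[of a b] by simp
qed


lemma F_sub: "subspace F"
  by (rule linear_subspace_image[OF tmap_linear subspace_UNIV])

lemma F_add: "y \<in> F \<Longrightarrow> z \<in> F \<Longrightarrow> y + z \<in> F" using F_sub subspace_add by blast
lemma F_diff: "y \<in> F \<Longrightarrow> z \<in> F \<Longrightarrow> y - z \<in> F" using F_sub subspace_diff by blast
lemma F_neg: "y \<in> F \<Longrightarrow> - y \<in> F" using F_sub subspace_neg by blast
lemma F_scale: "y \<in> F \<Longrightarrow> c *\<^sub>R y \<in> F" using F_sub subspace_scale by blast
lemma F_0: "0 \<in> F" using F_sub subspace_0 by blast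
lemma F_br: "y \<in> F \<Longrightarrow> br x y \<in> F"
proof -
  assume "y \<in> F" then obtain a where "y = be a" by auto
  then show ?thesis using invar[of x a] by (metis rangeI)
qed
lemma F_brl: "y \<in> F \<Longrightarrow> br y x \<in> F" using F_br F_neg anti by metis

lemma s_add: "y \<in> F \<Longrightarrow> z \<in> F \<Longrightarrow> s (y + z) = s y + s z" using slin unfolding linear_on_def by blast
lemma s_scale: "y \<in> F \<Longrightarrow> s (c *\<^sub>R y) = c *\<^sub>R s y" using slin unfolding linear_on_def by blast
lemma s_neg: "y \<in> F \<Longrightarrow> s (- y) = - s y" using s_scale[of y "-1"] by simp
lemma s_diff: "y \<in> F \<Longrightarrow> z \<in> F \<Longrightarrow> s (y - z) = s y - s z"
  using s_add[of y "-z"] s_neg[of z] F_neg[of z] by simp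
lemma s_0: "s 0 = 0" using s_scale[OF F_0, of 0] by simp
lemma bes: "y \<in> F \<Longrightarrow> be (s y) = y" using sinv by blast

lemma sig2: "\<sigma> * \<sigma> = 1" using sig by auto
lemma sig0: "\<sigma> \<noteq> 0" using sig by auto

lemma rep: "cd (br x y) a = cd x (cd y a) - cd y (cd x a)"
proof -
  have j: "br (br x y) z = br x (br y z) - br y (br x z)" for z
    using jac[of x y z] anti[of "br x y" z] anti[of z x] by (simp add: brl algebra_simps)
  have "cd (br x y) a \<bullet> z = (cd x (cd y a) - cd y (cd x a)) \<bullet> z" for z
    by (simp add: coad_dot inner_diff_left j inner_diff_right)
  then show ?thesis using vector_eq_rdot by blast
qed

lemma cd_F_V: "be a = 0 \<Longrightarrow> cd (be e) a = 0"
proof -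
  assume a: "be a = 0"
  have "cd (be e) a \<bullet> z = 0 \<bullet> z" for z
  proof -
    have "cd (be e) a \<bullet> z = - (a \<bullet> br (be e) z)" by (rule coad_dot)
    also have "\<dots> = a \<bullet> br z (be e)" using anti[of z "be e"] by simp
    also have "\<dots> = a \<bullet> be (cd z e)" by (simp add: invar)
    also have "\<dots> = be a \<bullet> cd z e" by (simp add: be_sym)
    finally show ?thesis using a by simp
  qed
  then show ?thesis using vector_eq_rdot by blast
qed

lemma coadd_eq: "coadd br (skew_part R) a x = br (al a) x + al (cd x a)"
proof -
  have lin: "linear (brd br (skew_part R) a)"
    by (rule linearI) (simp_all add: brd_def cdl tl algebra_simps)
  have "coadd br (skew_part R) a x \<bullet> d = (br (al a) x + al (cd x a)) \<bullet> d" for d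
  proof -
    have "coadd br (skew_part R) a x = (\<chi> j. (-x) \<bullet> brd br (skew_part R) a (axis j 1))"
      by (simp add: coadd_def)
    then have "coadd br (skew_part R) a x \<bullet> d = (-x) \<bullet> brd br (skew_part R) a d"
      using dot_chi[OF lin, of "-x" d] by (simp only:)
    also have "\<dots> = - (cd (al a) d \<bullet> x) + cd (al d) a \<bullet> x"
      by (simp add: brd_def inner_diff_right inner_commute)
    also have "\<dots> = d \<bullet> br (al a) x - a \<bullet> br (al d) x" by (simp add: coad_dot)
    also have "a \<bullet> br (al d) x = - (a \<bullet> br x (al d))" using anti[of "al d" x] by simp
    also have "a \<bullet> br x (al d) = - (cd x a \<bullet> al d)" by (simp add: coad_dot)
    also have "cd x a \<bullet> al d = - (al (cd x a) \<bullet> d)" by (simp add: al_skew)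
    finally show ?thesis by (simp add: inner_add_left inner_add_right inner_commute)
  qed
  then show ?thesis using vector_eq_rdot by blast
qed

lemma subalg: "lie_subalgebra (cbr br) (g_if (sym_part R))"
  unfolding lie_subalgebra_def g_if_def
proof (intro conjI ballI)
  show "subspace {u. snd u \<in> F}"
    unfolding subspace_def by (auto intro: F_0 F_add F_scale)
  fix u v :: "(real^'n) \<times> (real^'n)" assume "u \<in> {u. snd u \<in> F}" "v \<in> {u. snd u \<in> F}"
  then have "br (fst u) (snd v) \<in> F" "br (snd u) (fst v) \<in> F" using F_br F_brl by auto
  then show "cbr br u v \<in> {u. snd u \<in> F}"
    by (auto simp: cbr_def intro!: F_add)
qed

lemma module: "lie_module (cbr br) (g_if (sym_part R)) (\<lambda>u a. cd (fst u) a) (fperp (sym_part R))"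
  unfolding lie_module_def g_if_def fperp_def
proof (intro conjI ballI)
  show "subspace {a. be a = 0}"
    unfolding subspace_def by (auto simp: tl)
  fix u :: "(real^'n) \<times> (real^'n)" and a assume "u \<in> {u. snd u \<in> F}" "a \<in> {a. be a = 0}"
  then show "cd (fst u) a \<in> {a. be a = 0}" by (simp add: invar brl)
next
  show "bilinear_on {u. snd u \<in> F} {a. be a = 0} (\<lambda>u. cd (fst u))"
    by (simp add: bilinear_on_def linear_on_def cdl)
next
  fix u v :: "(real^'n) \<times> (real^'n)" and a assume u: "u \<in> {u. snd u \<in> F}" and v: "v \<in> {u. snd u \<in> F}" and a: "a \<in> {a. be a = 0}"
  then obtain e where e: "snd v = be e" by auto
  have "br (snd u) (snd v) = be (cd (snd u) e)" by (simp add: e invar)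
  then have "cd (br (snd u) (snd v)) a = 0" using cd_F_V a by simp
  then show "cd (fst (cbr br u v)) a = cd (fst u) (cd (fst v) a) - cd (fst v) (cd (fst u) a)"
    by (simp add: cbr_def cdl rep)
qed


abbreviation "L \<equiv> g_if (sym_part R)"
abbreviation "V \<equiv> fperp (sym_part R)"
abbreviation "tt \<equiv> tau br s \<sigma>"

lemma L_iff: "u \<in> L \<longleftrightarrow> snd u \<in> F" by (simp add: g_if_def)
lemma V_iff: "a \<in> V \<longleftrightarrow> be a = 0" by (simp add: fperp_def)

lemma tau_alt:
  assumes "u \<in> L" "v \<in> L"
  shows "tt u v = \<sigma> *\<^sub>R (cd (fst u) (s (snd v)) - cd (fst v) (s (snd u)) - s (snd (cbr br u v)))"
proof -
  have m: "br (fst u) (snd v) \<in> F" "br (fst v) (snd u) \<in> F" using assms F_br L_iff by auto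
  have "snd (cbr br u v) = br (fst u) (snd v) + - br (fst v) (snd u)"
    by (simp add: cbr_def anti[of "snd u" "fst v"])
  then have eq: "s (snd (cbr br u v)) = s (br (fst u) (snd v)) - s (br (fst v) (snd u))"
    using m s_diff by simp
  show ?thesis unfolding tau_def eq by (simp add: algebra_simps)
qed

lemma jac2: "br (br a b) c + br (br b c) a + br (br c a) b = 0"
proof -
  have "br (br a b) c + br (br b c) a + br (br c a) b = - (br c (br a b) + br a (br b c) + br b (br c a))"
    using anti[of "br a b" c] anti[of "br b c" a] anti[of "br c a" b] by simp
  also have "\<dots> = 0" using jac[of c a b] by (simp add: algebra_simps)
  finally show ?thesis .
qed

lemma QJ: "snd (cbr br (cbr br (x1,y1) (x2,y2)) (x3,y3)) - snd (cbr br (cbr br (x1,y1) (x3,y3)) (x2,y2))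
   + snd (cbr br (cbr br (x2,y2) (x3,y3)) (x1,y1)) = 0"
proof -
  let ?J = "\<lambda>a b c. br (br a b) c + br (br b c) a + br (br c a) b"
  have "snd (cbr br (cbr br (x1,y1) (x2,y2)) (x3,y3)) - snd (cbr br (cbr br (x1,y1) (x3,y3)) (x2,y2))
   + snd (cbr br (cbr br (x2,y2) (x3,y3)) (x1,y1)) = ?J x1 x2 y3 + ?J x1 y2 x3 + ?J y1 x2 x3 - ?J y1 y2 y3"
    using anti[of y3 x1] anti[of x3 x1] anti[of x3 y1] anti[of y3 y1]
    by (simp add: cbr_def brl algebra_simps)
  then show ?thesis by (simp add: jac2)
qed

lemma K: "t \<bullet> br (be e) z = e \<bullet> br z (be t)"
proof -
  have "t \<bullet> br (be e) z = - (t \<bullet> br z (be e))" using anti[of "be e" z] by simp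
  also have "\<dots> = - (t \<bullet> be (cd z e))" by (simp add: invar)
  also have "\<dots> = - (cd z e \<bullet> be t)" by (metis be_sym inner_commute)
  also have "\<dots> = e \<bullet> br z (be t)" by (simp add: coad_dot)
  finally show ?thesis .
qed

lemma YJ:
  assumes "y1 \<in> F" "y2 \<in> F" "y3 \<in> F"
  shows "cd (br y1 y2) (s y3) - cd (br y1 y3) (s y2) + cd (br y2 y3) (s y1) = 0"
proof -
  have b: "be (s y1) = y1" "be (s y2) = y2" "be (s y3) = y3" using assms bes by auto
  have "(cd (br y1 y2) (s y3) - cd (br y1 y3) (s y2) + cd (br y2 y3) (s y1)) \<bullet> z = 0 \<bullet> z" for z
  proof -
    have e1: "cd (br y1 y2) (s y3) \<bullet> z = s y2 \<bullet> br y1 (br z y3)"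
    proof -
      have h: "br y1 y2 = be (cd y1 (s y2))" by (simp add: invar b)
      have "cd (br y1 y2) (s y3) \<bullet> z = - (s y3 \<bullet> br (br y1 y2) z)" by (rule coad_dot)
      also have "\<dots> = - (s y3 \<bullet> br (be (cd y1 (s y2))) z)" by (simp only: h)
      also have "\<dots> = - (cd y1 (s y2) \<bullet> br z (be (s y3)))" by (simp add: K)
      also have "\<dots> = s y2 \<bullet> br y1 (br z y3)" by (simp add: coad_dot b)
      finally show ?thesis .
    qed
    have e2: "cd (br y1 y3) (s y2) \<bullet> z = - (s y2 \<bullet> br (br y1 y3) z)" by (rule coad_dot)
    have e3: "cd (br y2 y3) (s y1) \<bullet> z = - (s y2 \<bullet> br y3 (br z y1))"
    proof -
      have h: "br y2 y3 = - be (cd y3 (s y2))" using anti[of y2 y3] by (simp add: invar b)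
      have "cd (br y2 y3) (s y1) \<bullet> z = - (s y1 \<bullet> br (br y2 y3) z)" by (rule coad_dot)
      also have "\<dots> = - (s y1 \<bullet> br (- be (cd y3 (s y2))) z)" by (simp only: h)
      also have "\<dots> = cd y3 (s y2) \<bullet> br z (be (s y1))" by (simp add: K brl)
      also have "\<dots> = - (s y2 \<bullet> br y3 (br z y1))" by (simp add: coad_dot b)
      finally show ?thesis .
    qed
    have j: "br y1 (br z y3) + br (br y1 y3) z - br y3 (br z y1) = 0"
      using jac[of y1 z y3] anti[of "br y1 y3" z] anti[of y1 y3] anti[of z y1] by (simp add: brl)
    have "(cd (br y1 y2) (s y3) - cd (br y1 y3) (s y2) + cd (br y2 y3) (s y1)) \<bullet> z
       = s y2 \<bullet> (br y1 (br z y3) + br (br y1 y3) z - br y3 (br z y1))"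
      by (simp add: inner_add_left inner_diff_left e1 e2 e3 inner_add_right inner_diff_right)
    then show ?thesis using j by simp
  qed
  then show ?thesis using vector_eq_rdot by blast
qed


lemma cbr_L: "u \<in> L \<Longrightarrow> v \<in> L \<Longrightarrow> cbr br u v \<in> L"
  using subalg by (simp add: lie_subalgebra_def)

lemma cocyc:
  assumes u: "u \<in> L" and v: "v \<in> L" and w: "w \<in> L"
  shows "cd (fst u) (tt v w) - cd (fst v) (tt u w) + cd (fst w) (tt u v)
     - tt (cbr br u v) w + tt (cbr br u w) v - tt (cbr br v w) u = 0"
proof -
  obtain x1 y1 where u1: "u = (x1,y1)" by (cases u)
  obtain x2 y2 where v1: "v = (x2,y2)" by (cases v)
  obtain x3 y3 where w1: "w = (x3,y3)" by (cases w)
  have y: "y1 \<in> F" "y2 \<in> F" "y3 \<in> F" using u v w u1 v1 w1 L_iff by auto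
  define P12 where "P12 = s (snd (cbr br u v))"
  define P13 where "P13 = s (snd (cbr br u w))"
  define P23 where "P23 = s (snd (cbr br v w))"
  define Q1 where "Q1 = s (snd (cbr br (cbr br u v) w))"
  define Q2 where "Q2 = s (snd (cbr br (cbr br u w) v))"
  define Q3 where "Q3 = s (snd (cbr br (cbr br v w) u))"
  have t1: "tt v w = \<sigma> *\<^sub>R (cd x2 (s y3) - cd x3 (s y2) - P23)"
    using tau_alt[OF v w] by (simp add: P23_def v1 w1)
  have t2: "tt u w = \<sigma> *\<^sub>R (cd x1 (s y3) - cd x3 (s y1) - P13)"
    using tau_alt[OF u w] by (simp add: P13_def u1 w1)
  have t3: "tt u v = \<sigma> *\<^sub>R (cd x1 (s y2) - cd x2 (s y1) - P12)"
    using tau_alt[OF u v] by (simp add: P12_def u1 v1)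
  have t4: "tt (cbr br u v) w = \<sigma> *\<^sub>R (cd (fst (cbr br u v)) (s y3) - cd x3 P12 - Q1)"
    using tau_alt[OF cbr_L[OF u v] w] by (simp add: P12_def Q1_def w1)
  have t5: "tt (cbr br u w) v = \<sigma> *\<^sub>R (cd (fst (cbr br u w)) (s y2) - cd x2 P13 - Q2)"
    using tau_alt[OF cbr_L[OF u w] v] by (simp add: P13_def Q2_def v1)
  have t6: "tt (cbr br v w) u = \<sigma> *\<^sub>R (cd (fst (cbr br v w)) (s y1) - cd x1 P23 - Q3)"
    using tau_alt[OF cbr_L[OF v w] u] by (simp add: P23_def Q3_def u1)
  have f: "fst (cbr br u v) = br x1 x2 - br y1 y2" "fst (cbr br u w) = br x1 x3 - br y1 y3"
    "fst (cbr br v w) = br x2 x3 - br y2 y3" by (simp_all add: cbr_def u1 v1 w1)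
  have mQ: "snd (cbr br (cbr br u v) w) \<in> F" "snd (cbr br (cbr br u w) v) \<in> F" "snd (cbr br (cbr br v w) u) \<in> F"
    using cbr_L u v w L_iff by auto
  have "Q1 - Q2 + Q3 = s (snd (cbr br (cbr br u v) w) - snd (cbr br (cbr br u w) v) + snd (cbr br (cbr br v w) u))"
    using mQ by (simp add: Q1_def Q2_def Q3_def s_add s_diff F_diff)
  also have "\<dots> = 0" using QJ[of x1 y1 x2 y2 x3 y3] by (simp add: u1 v1 w1 s_0)
  finally have QJ': "Q1 = Q2 - Q3" by (simp add: algebra_simps)
  have YJ': "cd (br y1 y2) (s y3) = cd (br y1 y3) (s y2) - cd (br y2 y3) (s y1)"
    using YJ[OF y] by (simp add: algebra_simps)
  show ?thesis
    unfolding t1 t2 t3 t4 t5 t6 f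
    by (simp add: u1 v1 w1 cdl rep[of x1 x2] rep[of x1 x3] rep[of x2 x3] QJ' YJ' algebra_simps)
qed

lemma tau_V: "u \<in> L \<Longrightarrow> v \<in> L \<Longrightarrow> tt u v \<in> V"
  unfolding V_iff L_iff
  by (simp add: tau_def tl invar bes F_br)

lemma tau_self: "tt u u = 0" by (simp add: tau_def)

lemma cocycle: "lie_2cocycle (cbr br) L (\<lambda>u a. cd (fst u) a) V tt"
  unfolding lie_2cocycle_def
proof (intro conjI ballI)
  show "bilinear_on L L tt"
    unfolding bilinear_on_def linear_on_def
  proof (intro conjI ballI allI)
    fix u v w :: "(real^'n) \<times> (real^'n)" and c :: real
    assume "u \<in> L" "v \<in> L" "w \<in> L"
    then have m: "snd u \<in> F" "snd v \<in> F" "snd w \<in> F" using L_iff by auto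
    then have m2: "br x (snd u) \<in> F" "br x (snd v) \<in> F" "br x (snd w) \<in> F" for x using F_br by auto
    show "tt u (v + w) = tt u v + tt u w" using m m2
      by (simp add: tau_def brl s_add s_scale cdl algebra_simps)
    show "tt (v + w) u = tt v u + tt w u" using m m2
      by (simp add: tau_def brl s_add s_scale cdl algebra_simps)
    show "tt u (c *\<^sub>R v) = c *\<^sub>R tt u v" using m m2
      by (simp add: tau_def brl s_add s_scale cdl algebra_simps)
    show "tt (c *\<^sub>R v) u = c *\<^sub>R tt v u" using m m2
      by (simp add: tau_def brl s_add s_scale cdl algebra_simps)
  qed
qed (simp_all add: tau_V cocyc tau_self)


abbreviation "PP \<equiv> Phi (skew_part R) s \<sigma>"
abbreviation "A \<equiv> skew_part R"

lemma Phi_eq: "PP ((x,y),a) = (x - al (\<sigma> *\<^sub>R s y + a), \<sigma> *\<^sub>R s y + a)"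
  by (simp add: Phi_def tl algebra_simps)

lemma dbr_eq: "dbr br A (x - al c, c) (x' - al c', c') =
   (br x x' - br (al c) (al c') + al (brd br A c c') + al (cd x' c - cd x c'), cd x c' - cd x' c)"
  using anti[of "al c'" x] anti[of "al c'" "al c"]
  by (simp add: dbr_def coadd_eq brd_def brl cdl tl algebra_simps)

lemma hom:
  assumes p: "p \<in> L \<times> V" and q: "q \<in> L \<times> V"
  shows "PP (semidirect (cbr br) (\<lambda>u a. cd (fst u) a) tt p q) = dbr br A (PP p) (PP q)"
proof -
  obtain x y a where p1: "p = ((x,y),a)" by (metis prod.collapse)
  obtain x' y' a' where q1: "q = ((x',y'),a')" by (metis prod.collapse)
  have y: "y \<in> F" "y' \<in> F" and a: "be a = 0" "be a' = 0"
    using p q p1 q1 L_iff V_iff by auto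
  define c where "c = \<sigma> *\<^sub>R s y + a"
  define c' where "c' = \<sigma> *\<^sub>R s y' + a'"
  have bc: "be c = \<sigma> *\<^sub>R y" "be c' = \<sigma> *\<^sub>R y'" using y a bes by (simp_all add: c_def c'_def tl)
  have tau: "tt (x,y) (x',y') = \<sigma> *\<^sub>R (cd x (s y') - cd x' (s y) - s (snd (cbr br (x,y) (x',y'))))"
    using tau_alt[of "(x,y)" "(x',y')"] y L_iff by simp
  have sd: "semidirect (cbr br) (\<lambda>u a. cd (fst u) a) tt p q =
     ((br x x' - br y y', snd (cbr br (x,y) (x',y'))), cd x a' - cd x' a + tt (x,y) (x',y'))"
    by (simp add: semidirect_def p1 q1 cbr_def)
  have c2: "\<sigma> *\<^sub>R s (snd (cbr br (x,y) (x',y'))) + (cd x a' - cd x' a + tt (x,y) (x',y')) = cd x c' - cd x' c"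
    by (simp add: tau c_def c'_def cdl algebra_simps)
  have k: "br (al c) (al c') - al (brd br A c c') = br y y'"
    using KEY[of c c'] bc sig2 by (simp add: brl)
  have "PP (semidirect (cbr br) (\<lambda>u a. cd (fst u) a) tt p q) =
     (br x x' - br y y' - al (cd x c' - cd x' c), cd x c' - cd x' c)"
    unfolding sd Phi_eq c2 by simp
  also have "\<dots> = dbr br A (PP p) (PP q)"
    unfolding p1 q1 Phi_eq c_def[symmetric] c'_def[symmetric] dbr_eq
    using k[symmetric] by (simp add: tl algebra_simps)
  finally show ?thesis .
qed


lemma Phi_lin: "linear_on (L \<times> V) PP"
  unfolding linear_on_def
proof (intro conjI ballI allI)
  fix p q :: "((real^'n) \<times> (real^'n)) \<times> (real^'n)" and c :: real
  assume "p \<in> L \<times> V" "q \<in> L \<times> V"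
  then have m: "snd (fst p) \<in> F" "snd (fst q) \<in> F" using L_iff by auto
  show "PP (p + q) = PP p + PP q" using m by (simp add: Phi_def s_add tl algebra_simps)
  show "PP (c *\<^sub>R p) = c *\<^sub>R PP p" using m by (simp add: Phi_def s_scale tl algebra_simps)
qed

lemma Phi_bij: "bij_betw PP (L \<times> V) UNIV"
  unfolding bij_betw_def
proof
  show "inj_on PP (L \<times> V)"
  proof (rule inj_onI)
    fix p q assume p: "p \<in> L \<times> V" and q: "q \<in> L \<times> V" and e: "PP p = PP q"
    obtain x y a where p1: "p = ((x,y),a)" by (metis prod.collapse)
    obtain x' y' a' where q1: "q = ((x',y'),a')" by (metis prod.collapse)
    have y: "y \<in> F" "y' \<in> F" and a: "be a = 0" "be a' = 0"
      using p q p1 q1 L_iff V_iff by auto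
    have e0: "(x - al (\<sigma> *\<^sub>R s y + a), \<sigma> *\<^sub>R s y + a) = (x' - al (\<sigma> *\<^sub>R s y' + a'), \<sigma> *\<^sub>R s y' + a')"
      using e by (simp only: p1 q1 Phi_eq)
    then have e2: "\<sigma> *\<^sub>R s y + a = \<sigma> *\<^sub>R s y' + a'" and e1: "x - al (\<sigma> *\<^sub>R s y + a) = x' - al (\<sigma> *\<^sub>R s y' + a')"
      by blast+
    from arg_cong[OF e2, of be] have "\<sigma> *\<^sub>R y = \<sigma> *\<^sub>R y'" using y a bes by (simp add: tl)
    then have "y = y'" using sig0 by simp
    then have "a = a'" using e2 by simp
    have "x = x'" using e1 unfolding e2 by simp
    then show "p = q" using p1 q1 \<open>y = y'\<close> \<open>a = a'\<close> by simp
  qed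
  show "PP ` (L \<times> V) = UNIV"
  proof (rule set_eqI, rule iffI)
    fix w :: "(real^'n) \<times> (real^'n)"
    obtain z b where w: "w = (z,b)" by (cases w)
    define y where "y = \<sigma> *\<^sub>R be b"
    define a where "a = b - \<sigma> *\<^sub>R s y"
    have yF: "y \<in> F" unfolding y_def by (metis rangeI tl(2))
    have "be a = be b - \<sigma> *\<^sub>R y" unfolding a_def using yF bes by (simp add: tl)
    also have "\<dots> = 0" using sig2 by (simp add: y_def)
    finally have aV: "a \<in> V" using V_iff by simp
    have "((z + al b, y), a) \<in> L \<times> V" using yF aV L_iff by simp
    moreover have "PP ((z + al b, y), a) = w" by (simp add: Phi_eq a_def w)
    ultimately show "w \<in> PP ` (L \<times> V)" by (metis image_eqI)
  qed simp
qed


lemma main: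
  "lie_subalgebra (cbr br) (g_if (sym_part R))
    \<and> lie_module (cbr br) (g_if (sym_part R)) (\<lambda>u a. coad br (fst u) a) (fperp (sym_part R))
    \<and> lie_2cocycle (cbr br) (g_if (sym_part R)) (\<lambda>u a. coad br (fst u) a) (fperp (sym_part R)) (tau br s \<sigma>)
    \<and> lie_iso (semidirect (cbr br) (\<lambda>u a. coad br (fst u) a) (tau br s \<sigma>))
              (g_if (sym_part R) \<times> fperp (sym_part R))
              (dbr br (skew_part R)) UNIV
              (Phi (skew_part R) s \<sigma>)"
  using subalg module cocycle Phi_bij Phi_lin hom by (simp add: lie_iso_def)

end

theorem theorem3p20:
  fixes br :: "real^'n::finite \<Rightarrow> real^'n \<Rightarrow> real^'n"
    and R :: "real^'n^'n"
    and s :: "real^'n \<Rightarrow> real^'n"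
    and \<sigma> :: real
  assumes "lie_algebra br"
    and "typeII_CYBE br R"
    and "ad_invariant br (sym_part R)"
    and "linear_on (range (tmap (sym_part R))) s"
    and "\<forall>y\<in>range (tmap (sym_part R)). tmap (sym_part R) (s y) = y"
    and "\<sigma> = 1 \<or> \<sigma> = -1"
  shows "lie_subalgebra (cbr br) (g_if (sym_part R))
    \<and> lie_module (cbr br) (g_if (sym_part R)) (\<lambda>u a. coad br (fst u) a) (fperp (sym_part R))
    \<and> lie_2cocycle (cbr br) (g_if (sym_part R)) (\<lambda>u a. coad br (fst u) a) (fperp (sym_part R)) (tau br s \<sigma>)
    \<and> lie_iso (semidirect (cbr br) (\<lambda>u a. coad br (fst u) a) (tau br s \<sigma>))
              (g_if (sym_part R) \<times> fperp (sym_part R))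
              (dbr br (skew_part R)) UNIV
              (Phi (skew_part R) s \<sigma>)"
  using T.main[OF T.intro[OF assms]] .

end
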